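(* Let $0<\beta<2$ and let $\Lambda>0$, $\delta>0$ with $\beta+\delta>1$. For $\varepsilon$ with $0<\varepsilon<\beta/2$, and additionally $\varepsilon<\frac{\beta-1}{2}$ if $\beta>1$, let $u_\varepsilon\in C^1(\mathbb{R})$ be an even function of the form \[u_\varepsilon(x)=\begin{cases}|x|^{\beta-\varepsilon},&|x|\ge1,\\ \phi(x),&|x|<1,\end{cases}\] where $\phi$ (possibly depending on $\varepsilon$) satisfies $0\le\phi(x)\le\Lambda|x|^{\beta+\delta}$ and $|\phi'(x)|\le\Lambda|x|^{\beta+\delta-1}$ for $|x|\le1$. Then there exist $\varepsilon_0>0$ and constants $C_0,C_1>0$, independent of $\varepsilon$, such that for all admissible $0<\varepsilon<\varepsilon_0$ \[\mathcal{L}u_\varepsilon(0)\ge\frac{C_0}{\varepsilon},\qquad 0<\Gamma_2(u_\varepsilon)(0)\le\frac{C_1}{\varepsilon}.\] In particular, for every $\mu>0$ there exists such a $u$ with $0<\Gamma_2(u)(0)<\mu(\mathcal{L}u(0))^2<\infty$.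
   Context: Here $d=1$: $c_{\beta,1}=\frac{2^\beta\Gamma(\frac{1+\beta}{2})}{\pi^{1/2}|\Gamma(-\frac{\beta}{2})|}$, $\mathcal{L}u(x)=c_{\beta,1}\int_{\mathbb{R}}\frac{u(x+h)-2u(x)+u(x-h)}{|h|^{1+\beta}}dh$, $\Gamma_2(u)(x)=c_{\beta,1}^2\int_{\mathbb{R}}\int_{\mathbb{R}}\frac{[u(x+h+\sigma)-u(x+h)-u(x+\sigma)+u(x)]^2}{|h|^{1+\beta}|\sigma|^{1+\beta}}dh\,d\sigma$ (defined by these integrals also for unbounded functions when they converge). *)

theory Defs
  imports "HOL-Analysis.Analysis"
begin

definition c_beta :: "real \<Rightarrow> real" where
  "c_beta \<beta> = 2 powr \<beta> * Gamma ((1 + \<beta>) / 2) / (pi powr (1/2) * \<bar>Gamma (- \<beta> / 2)\<bar>)"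

definition L_integrand :: "real \<Rightarrow> (real \<Rightarrow> real) \<Rightarrow> real \<Rightarrow> real \<Rightarrow> real" where
  "L_integrand \<beta> u x h = (u (x + h) - 2 * u x + u (x - h)) / \<bar>h\<bar> powr (1 + \<beta>)"

definition frac_L :: "real \<Rightarrow> (real \<Rightarrow> real) \<Rightarrow> real \<Rightarrow> real" where
  "frac_L \<beta> u x = c_beta \<beta> * (\<integral>h. L_integrand \<beta> u x h \<partial>lborel)"

definition G2_integrand :: "real \<Rightarrow> (real \<Rightarrow> real) \<Rightarrow> real \<Rightarrow> real \<times> real \<Rightarrow> real" where
  "G2_integrand \<beta> u x p = (case p of (h, \<sigma>) \<Rightarrow>
     (u (x + h + \<sigma>) - u (x + h) - u (x + \<sigma>) + u x)\<^sup>2 / (\<bar>h\<bar> powr (1 + \<beta>) * \<bar>\<sigma>\<bar> powr (1 + \<beta>)))"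

definition Gamma2 :: "real \<Rightarrow> (real \<Rightarrow> real) \<Rightarrow> real \<Rightarrow> real" where
  "Gamma2 \<beta> u x = (c_beta \<beta>)\<^sup>2 * (\<integral>p. G2_integrand \<beta> u x p \<partial>(lborel \<Otimes>\<^sub>M lborel))"

definition admissible_eps :: "real \<Rightarrow> real \<Rightarrow> bool" where
  "admissible_eps \<beta> \<epsilon> \<longleftrightarrow> 0 < \<epsilon> \<and> \<epsilon> < \<beta> / 2 \<and> (\<beta> > 1 \<longrightarrow> \<epsilon> < (\<beta> - 1) / 2)"

text \<open>u is a C^1 even function equal to |x|^(beta-eps) for |x| >= 1, and on |x| <= 1
  it coincides with (the continuous C^1 extension of) phi satisfying the bounds.\<close>
definition test_fun :: "real \<Rightarrow> real \<Rightarrow> real \<Rightarrow> real \<Rightarrow> (real \<Rightarrow> real) \<Rightarrow> bool" where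
  "test_fun \<beta> \<Lambda> \<delta> \<epsilon> u \<longleftrightarrow>
     u C1_differentiable_on UNIV \<and>
     (\<forall>x. u (- x) = u x) \<and>
     (\<forall>x. \<bar>x\<bar> \<ge> 1 \<longrightarrow> u x = \<bar>x\<bar> powr (\<beta> - \<epsilon>)) \<and>
     (\<forall>x. \<bar>x\<bar> \<le> 1 \<longrightarrow> 0 \<le> u x \<and> u x \<le> \<Lambda> * \<bar>x\<bar> powr (\<beta> + \<delta>)) \<and>
     (\<forall>x. \<bar>x\<bar> \<le> 1 \<longrightarrow> \<bar>deriv u x\<bar> \<le> \<Lambda> * \<bar>x\<bar> powr (\<beta> + \<delta> - 1))"

end

theory Submission
  imports Defs
begin


lemma two_ennreal: "0 \<le> (x::real) \<Longrightarrow> 2 * ennreal x = ennreal (2*x)"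
  by (subst ennreal_mult) auto

lemma sym_le:
  fixes F :: "real \<Rightarrow> real"
  assumes [measurable]: "F \<in> borel_measurable borel"
  shows "(\<integral>\<^sup>+x. ennreal (F \<bar>x\<bar>) \<partial>lborel) \<le> 2 * (\<integral>\<^sup>+x. ennreal (F x) * indicator {0..} x \<partial>lborel)"
proof -
  have "(\<integral>\<^sup>+x. ennreal (F \<bar>x\<bar>) \<partial>lborel) = (\<integral>\<^sup>+x. ennreal (F x) * indicator {0..} x + ennreal (F (-x)) * indicator {..<0} x \<partial>lborel)"
    by (intro nn_integral_cong) (auto simp: indicator_def)
  also have "\<dots> = (\<integral>\<^sup>+x. ennreal (F x) * indicator {0..} x \<partial>lborel) + (\<integral>\<^sup>+x. ennreal (F (-x)) * indicator {..<0} x \<partial>lborel)"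
    by (intro nn_integral_add) auto
  also have "(\<integral>\<^sup>+x. ennreal (F (-x)) * indicator {..<0} x \<partial>lborel) = (\<integral>\<^sup>+x. ennreal (F (-(0 + (-1) * x))) * indicator {..<0} (0 + (-1) * x) \<partial>lborel)"
    by (subst nn_integral_real_affine[where c="-1" and t=0]) auto
  also have "\<dots> \<le> (\<integral>\<^sup>+x. ennreal (F x) * indicator {0..} x \<partial>lborel)"
    by (intro nn_integral_mono) (auto simp: indicator_def)
  finally show ?thesis
    by (simp add: mult_2 add_left_mono)
qed

lemma sym_ge:
  fixes F :: "real \<Rightarrow> real"
  shows "(\<integral>\<^sup>+x. ennreal (F x) * indicator {0..} x \<partial>lborel) \<le> (\<integral>\<^sup>+x. ennreal (F \<bar>x\<bar>) \<partial>lborel)"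
  by (intro nn_integral_mono) (auto simp: indicator_def)

lemma int_ball_pow:
  fixes c r :: real
  assumes "c > -1" "r \<ge> 0"
  shows "(\<integral>\<^sup>+x. ennreal (indicator {..r} \<bar>x\<bar> * \<bar>x\<bar> powr c) \<partial>lborel) \<le> ennreal (2 * (r powr (c+1) / (c+1)))"
proof -
  have "(\<integral>\<^sup>+x. ennreal (indicator {..r} \<bar>x\<bar> * \<bar>x\<bar> powr c) \<partial>lborel)
     \<le> 2 * (\<integral>\<^sup>+x. ennreal (indicator {..r} x * x powr c) * indicator {0..} x \<partial>lborel)"
    by (rule sym_le[where F="\<lambda>x. indicator {..r} x * x powr c"]) measurable
  also have "(\<integral>\<^sup>+x. ennreal (indicator {..r} x * x powr c) * indicator {0..} x \<partial>lborel)
     = (\<integral>\<^sup>+x. ennreal (x powr c) * indicator {0..r} x \<partial>lborel)"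
    by (intro nn_integral_cong) (auto simp: indicator_def)
  also have "\<dots> = ennreal (r powr (c+1) / (c+1))"
    by (rule nn_integral_has_integral_lebesgue') (use has_integral_powr_from_0 assms in auto)
  also have "2 * ennreal (r powr (c+1) / (c+1)) = ennreal (2 * (r powr (c+1) / (c+1)))"
    using assms by (intro two_ennreal) auto
  finally show ?thesis .
qed

lemma int_out_pow:
  fixes c :: real
  assumes "c < -1"
  shows "(\<integral>\<^sup>+x. ennreal (indicator {1<..} \<bar>x\<bar> * \<bar>x\<bar> powr c) \<partial>lborel) \<le> ennreal (2 * (-1 / (c+1)))"
proof -
  have "(\<integral>\<^sup>+x. ennreal (indicator {1<..} \<bar>x\<bar> * \<bar>x\<bar> powr c) \<partial>lborel)
     \<le> 2 * (\<integral>\<^sup>+x. ennreal (indicator {1<..} x * x powr c) * indicator {0..} x \<partial>lborel)"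
    by (rule sym_le[where F="\<lambda>x. indicator {1<..} x * x powr c"]) measurable
  also have "(\<integral>\<^sup>+x. ennreal (indicator {1<..} x * x powr c) * indicator {0..} x \<partial>lborel)
     \<le> (\<integral>\<^sup>+x. ennreal (x powr c) * indicator {1..} x \<partial>lborel)"
    by (intro nn_integral_mono) (auto simp: indicator_def)
  also have "\<dots> = ennreal (-(1 powr (c+1)) / (c+1))"
    by (rule nn_integral_has_integral_lebesgue') (use has_integral_powr_to_inf[of c 1] assms in auto)
  also have "-(1 powr (c+1)) / (c+1) = -1 / (c+1)" by simp
  finally have "(\<integral>\<^sup>+x. ennreal (indicator {1<..} \<bar>x\<bar> * \<bar>x\<bar> powr c) \<partial>lborel) \<le> 2 * ennreal (-1 / (c+1))"
    by (simp add: mult_left_mono)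
  also have "2 * ennreal (-1 / (c+1)) = ennreal (2 * (-1 / (c+1)))"
    using assms by (intro two_ennreal) auto
  finally show ?thesis .
qed

lemma int_out_pow_ge:
  fixes c :: real
  assumes "c < -1"
  shows "ennreal (-1 / (c+1)) \<le> (\<integral>\<^sup>+x. ennreal (indicator {1..} \<bar>x\<bar> * \<bar>x\<bar> powr c) \<partial>lborel)"
proof -
  have "ennreal (-1 / (c+1)) = (\<integral>\<^sup>+x. ennreal (x powr c) * indicator {1..} x \<partial>lborel)"
    using nn_integral_has_integral_lebesgue'[of "{1..}" "\<lambda>x. x powr c", OF _ has_integral_powr_to_inf[of c 1]] assms by auto
  also have "\<dots> = (\<integral>\<^sup>+x. ennreal (indicator {1..} x * x powr c) * indicator {0..} x \<partial>lborel)"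
    by (intro nn_integral_cong) (auto simp: indicator_def)
  also have "\<dots> \<le> (\<integral>\<^sup>+x. ennreal (indicator {1..} \<bar>x\<bar> * \<bar>x\<bar> powr c) \<partial>lborel)"
    by (rule sym_ge)
  finally show ?thesis .
qed



lemma mvt_bound:
  fixes u :: "real \<Rightarrow> real"
  assumes der: "\<And>t. (u has_real_derivative u' t) (at t)"
    and bd: "\<And>t. min a b \<le> t \<Longrightarrow> t \<le> max a b \<Longrightarrow> \<bar>u' t\<bar> \<le> M"
  shows "\<bar>u b - u a\<bar> \<le> M * \<bar>b - a\<bar>"
proof (cases a b rule: linorder_cases)
  case less
  then obtain z where z: "a < z" "z < b" "u b - u a = (b - a) * u' z"
    using MVT2[OF less der] by blast
  have "\<bar>u' z\<bar> \<le> M" using z less by (intro bd) auto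
  then show ?thesis using z less by (simp add: abs_mult mult.commute mult_right_mono)
next
  case equal then show ?thesis by simp
next
  case greater
  then obtain z where z: "b < z" "z < a" "u a - u b = (a - b) * u' z"
    using MVT2[OF greater der] by blast
  have "\<bar>u' z\<bar> \<le> M" using z greater by (intro bd) auto
  have "\<bar>u b - u a\<bar> = \<bar>u a - u b\<bar>" by simp
  also have "\<dots> = \<bar>a - b\<bar> * \<bar>u' z\<bar>" using z by (simp add: abs_mult)
  also have "\<dots> \<le> \<bar>a - b\<bar> * M" using \<open>\<bar>u' z\<bar> \<le> M\<close> by (simp add: mult_left_mono)
  finally show ?thesis by (simp add: mult.commute abs_minus_commute)
qed

locale tset =
  fixes \<beta> \<Lambda> \<delta> \<epsilon> :: real and u :: "real \<Rightarrow> real"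
  assumes b0: "0 < \<beta>" and b2: "\<beta> < 2" and L0: "0 < \<Lambda>" and d0: "0 < \<delta>" and bd1: "\<beta> + \<delta> > 1"
    and adm: "admissible_eps \<beta> \<epsilon>" and tf: "test_fun \<beta> \<Lambda> \<delta> \<epsilon> u"
begin

definition "pp = \<beta> - \<epsilon>"
definition "qq = \<beta> + \<delta>"
definition "KK = max \<Lambda> 2"

lemma e0: "0 < \<epsilon>" and eb: "\<epsilon> < \<beta>/2" using adm by (auto simp: admissible_eps_def)

lemma p0: "0 < pp" and p2: "pp < 2" and pq: "pp < qq" and q1: "1 < qq"
  using e0 eb b0 b2 d0 bd1 by (auto simp: pp_def qq_def)

lemma p_ne1: "pp \<noteq> 1"
  using adm b0 by (auto simp: pp_def admissible_eps_def)

lemma K2: "2 \<le> KK" and KL: "\<Lambda> \<le> KK" by (auto simp: KK_def)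

lemma u_out: "\<bar>x\<bar> \<ge> 1 \<Longrightarrow> u x = \<bar>x\<bar> powr pp"
  using tf by (auto simp: test_fun_def pp_def)

lemma u_in: "\<bar>x\<bar> \<le> 1 \<Longrightarrow> 0 \<le> u x \<and> u x \<le> \<Lambda> * \<bar>x\<bar> powr qq"
  using tf by (auto simp: test_fun_def qq_def)

lemma du_in: "\<bar>x\<bar> \<le> 1 \<Longrightarrow> \<bar>deriv u x\<bar> \<le> \<Lambda> * \<bar>x\<bar> powr (qq - 1)"
  using tf by (auto simp: test_fun_def qq_def)

lemma u_even: "u (-x) = u x" using tf by (auto simp: test_fun_def)

lemma u_der: "(u has_real_derivative deriv u x) (at x)"
proof -
  obtain D where D: "\<And>x. (u has_vector_derivative D x) (at x)"
    using tf by (auto simp: test_fun_def C1_differentiable_on_def)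
  then have "(u has_real_derivative D x) (at x)"
    by (simp add: has_real_derivative_iff_has_vector_derivative)
  moreover then have "deriv u x = D x" by (rule DERIV_imp_deriv)
  ultimately show ?thesis by simp
qed

lemma u_cont: "isCont u x"
  using u_der by (rule DERIV_isCont)

lemma u0: "u 0 = 0" using u_in[of 0] q1 by auto

lemma u_nonneg: "0 \<le> u x"
  using u_in[of x] u_out[of x] by (cases "\<bar>x\<bar> \<le> 1") auto

lemma u_le_q: "u x \<le> KK * \<bar>x\<bar> powr qq"
proof (cases "\<bar>x\<bar> \<le> 1")
  case True then show ?thesis using u_in[of x] KL by (meson mult_right_mono order_trans powr_ge_zero)
next
  case False
  then have "u x = \<bar>x\<bar> powr pp" using u_out by auto
  also have "\<dots> \<le> \<bar>x\<bar> powr qq" using False pq by (intro powr_mono) auto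
  also have "\<dots> \<le> KK * \<bar>x\<bar> powr qq" using K2 by (intro mult_le_cancel_right1[THEN iffD2]) auto
  finally show ?thesis .
qed

lemma u_le_p: "u x \<le> KK * \<bar>x\<bar> powr pp"
proof (cases "\<bar>x\<bar> \<le> 1")
  case True
  then have "u x \<le> \<Lambda> * \<bar>x\<bar> powr qq" using u_in by auto
  also have "\<dots> \<le> KK * \<bar>x\<bar> powr pp"
  proof (cases "x = 0")
    case False
    then have "\<bar>x\<bar> powr qq \<le> \<bar>x\<bar> powr pp" using True pq by (intro powr_mono') auto
    then show ?thesis using KL L0 by (meson less_imp_le mult_mono powr_ge_zero order_trans)
  qed (use q1 p0 in auto)
  finally show ?thesis .
next
  case False
  then have "u x = \<bar>x\<bar> powr pp" using u_out by auto
  also have "\<dots> \<le> KK * \<bar>x\<bar> powr pp" using K2 by (intro mult_le_cancel_right1[THEN iffD2]) auto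
  finally show ?thesis .
qed

lemma du_out: assumes "\<bar>t\<bar> > 1" shows "\<bar>deriv u t\<bar> = pp * \<bar>t\<bar> powr (pp - 1)"
proof (cases "t > 1")
  case True
  have "((\<lambda>y. y powr pp) has_real_derivative pp * t powr (pp - 1)) (at t)"
    using True by (intro has_real_derivative_powr) auto
  then have "(u has_real_derivative pp * t powr (pp - 1)) (at t)"
    by (rule has_field_derivative_transform_within_open[where S="{1<..}"]) (use True u_out in auto)
  then have "deriv u t = pp * t powr (pp - 1)" by (rule DERIV_imp_deriv)
  then show ?thesis using True p0 by simp
next
  case False
  then have t: "t < -1" using assms by auto
  have "((\<lambda>y. (-y) powr pp) has_real_derivative pp * (-t) powr (pp - 1) * (-1)) (at t)"
    using t by (auto intro!: derivative_eq_intros)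
  then have "(u has_real_derivative pp * (-t) powr (pp - 1) * (-1)) (at t)"
    by (rule has_field_derivative_transform_within_open[where S="{..<-1}"]) (use t u_out in auto)
  then have "deriv u t = pp * (-t) powr (pp - 1) * (-1)" by (rule DERIV_imp_deriv)
  then show ?thesis using t p0 by simp
qed

lemma du_q: "\<bar>deriv u t\<bar> \<le> KK * \<bar>t\<bar> powr (qq - 1)"
proof (cases "\<bar>t\<bar> \<le> 1")
  case True then show ?thesis using du_in[of t] KL by (meson mult_right_mono order_trans powr_ge_zero)
next
  case False
  then have "\<bar>deriv u t\<bar> = pp * \<bar>t\<bar> powr (pp - 1)" using du_out by auto
  also have "\<dots> \<le> KK * \<bar>t\<bar> powr (qq - 1)"
    using False pq p2 K2 p0 by (intro mult_mono powr_mono) auto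
  finally show ?thesis .
qed

lemma du_p: assumes "t \<noteq> 0" shows "\<bar>deriv u t\<bar> \<le> KK * \<bar>t\<bar> powr (pp - 1)"
proof (cases "\<bar>t\<bar> \<le> 1")
  case True
  then have "\<bar>deriv u t\<bar> \<le> \<Lambda> * \<bar>t\<bar> powr (qq - 1)" using du_in by auto
  also have "\<dots> \<le> KK * \<bar>t\<bar> powr (pp - 1)"
    using True pq assms KL L0 by (intro mult_mono powr_mono') auto
  finally show ?thesis .
next
  case False
  then have "\<bar>deriv u t\<bar> = pp * \<bar>t\<bar> powr (pp - 1)" using du_out by auto
  also have "\<dots> \<le> KK * \<bar>t\<bar> powr (pp - 1)"
    using p2 K2 by (intro mult_right_mono) auto
  finally show ?thesis .
qed

end


lemma ratio_pow_le2:
  fixes r s :: real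
  assumes "1/2 \<le> r" "r \<le> 3/2" "\<bar>s\<bar> \<le> 1"
  shows "r powr s \<le> 2"
proof (cases "r \<ge> 1")
  case True
  have "r powr s \<le> r powr 1" using True assms by (intro powr_mono) auto
  then show ?thesis using assms by (simp add: powr_one)
next
  case False
  have "r powr s \<le> r powr (-1)" using False assms by (intro powr_mono') (auto simp: abs_le_iff)
  also have "\<dots> = 1 / r" using assms by (simp add: powr_minus_divide)
  also have "\<dots> \<le> 2" using assms by (simp add: divide_le_eq)
  finally show ?thesis .
qed

lemma powr_sq: "((\<sigma>::real) powr s)\<^sup>2 = \<sigma> powr (2 * s)" by (simp add: power2_eq_square powr_add[symmetric])

lemma sq_div_bound:
  fixes X C s r \<beta> h \<sigma> :: real
  assumes "\<bar>X\<bar> \<le> C * \<sigma> powr s * h powr r" "\<sigma> > 0" "h > 0"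
  shows "X\<^sup>2 / (h powr (1+\<beta>) * \<sigma> powr (1+\<beta>)) \<le> C\<^sup>2 * \<sigma> powr (2 * s - (1+\<beta>)) * h powr (2 * r - (1+\<beta>))"
proof -
  have "X\<^sup>2 = \<bar>X\<bar>\<^sup>2" by simp
  also have "\<dots> \<le> (C * \<sigma> powr s * h powr r)\<^sup>2" using assms(1) by (intro power_mono) auto
  also have "\<dots> = C\<^sup>2 * \<sigma> powr (2 * s) * h powr (2 * r)"
    by (simp add: power_mult_distrib powr_sq)
  finally have 1: "X\<^sup>2 \<le> C\<^sup>2 * \<sigma> powr (2 * s) * h powr (2 * r)" .
  have "X\<^sup>2 / (h powr (1+\<beta>) * \<sigma> powr (1+\<beta>)) \<le> C\<^sup>2 * \<sigma> powr (2 * s) * h powr (2 * r) / (h powr (1+\<beta>) * \<sigma> powr (1+\<beta>))"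
    using assms by (intro divide_right_mono 1) auto
  also have "\<dots> = C\<^sup>2 * (\<sigma> powr (2 * s) / \<sigma> powr (1+\<beta>)) * (h powr (2 * r) / h powr (1+\<beta>))" by simp
  also have "\<dots> = C\<^sup>2 * \<sigma> powr (2 * s - (1+\<beta>)) * h powr (2 * r - (1+\<beta>))"
    by (simp only: powr_diff)
  finally show ?thesis .
qed



context tset begin

definition "FF h \<sigma> = u (h + \<sigma>) - u h - u \<sigma>"
definition "CQ = KK * (2 powr (qq - 1) + 1)"

lemma F_le_sum: "\<bar>FF h \<sigma>\<bar> \<le> \<bar>u (h + \<sigma>) - u h\<bar> + u \<sigma>"
  using u_nonneg[of \<sigma>] by (simp add: FF_def)

lemma F_le_sum3: "\<bar>FF h \<sigma>\<bar> \<le> u (h + \<sigma>) + u h + u \<sigma>"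
  using u_nonneg[of \<sigma>] u_nonneg[of h] u_nonneg[of "h+\<sigma>"] by (simp add: FF_def)

lemma FQ:
  assumes hs: "\<bar>\<sigma>\<bar> \<le> \<bar>h\<bar>"
  shows "\<bar>FF h \<sigma>\<bar> \<le> CQ * \<bar>\<sigma>\<bar> * \<bar>h\<bar> powr (qq - 1)"
proof -
  have m: "\<bar>u (h+\<sigma>) - u h\<bar> \<le> (KK * (2 * \<bar>h\<bar>) powr (qq - 1)) * \<bar>(h+\<sigma>) - h\<bar>"
  proof (rule mvt_bound[OF u_der])
    fix t assume t: "min h (h+\<sigma>) \<le> t" "t \<le> max h (h+\<sigma>)"
    have "\<bar>t\<bar> \<le> 2 * \<bar>h\<bar>" using t hs by (auto simp: abs_le_iff min_def max_def split: if_splits)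
    then have "\<bar>t\<bar> powr (qq - 1) \<le> (2 * \<bar>h\<bar>) powr (qq - 1)" using q1 by (intro powr_mono2) auto
    then show "\<bar>deriv u t\<bar> \<le> KK * (2 * \<bar>h\<bar>) powr (qq - 1)"
      using du_q[of t] K2 by (meson mult_left_mono order_trans le_less_trans less_imp_le zero_less_numeral order.strict_trans1)
  qed
  have e: "(2 * \<bar>h\<bar>) powr (qq - 1) = 2 powr (qq - 1) * \<bar>h\<bar> powr (qq - 1)" by (simp add: powr_mult)
  have us: "u \<sigma> \<le> KK * \<bar>\<sigma>\<bar> * \<bar>h\<bar> powr (qq - 1)"
  proof (cases "\<sigma> = 0")
    case True then show ?thesis using u0 K2 by simp
  next
    case False
    have "\<bar>\<sigma>\<bar> powr qq = \<bar>\<sigma>\<bar> powr 1 * \<bar>\<sigma>\<bar> powr (qq - 1)" using False by (subst powr_add[symmetric]) simp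
    also have "\<dots> \<le> \<bar>\<sigma>\<bar> * \<bar>h\<bar> powr (qq - 1)" using False hs q1 by (auto intro!: mult_left_mono powr_mono2)
    finally have "\<bar>\<sigma>\<bar> powr qq \<le> \<bar>\<sigma>\<bar> * \<bar>h\<bar> powr (qq - 1)" .
    then show ?thesis using u_le_q[of \<sigma>] K2
      by (metis (no_types, opaque_lifting) mult.assoc mult_left_mono order_trans linorder_not_le nle_le zero_le_numeral order.trans)
  qed
  have "\<bar>FF h \<sigma>\<bar> \<le> KK * (2 powr (qq - 1) * \<bar>h\<bar> powr (qq - 1)) * \<bar>\<sigma>\<bar> + KK * \<bar>\<sigma>\<bar> * \<bar>h\<bar> powr (qq - 1)"
    using F_le_sum[of h \<sigma>] m us e by simp
  also have "\<dots> = CQ * \<bar>\<sigma>\<bar> * \<bar>h\<bar> powr (qq - 1)" by (simp add: CQ_def algebra_simps)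
  finally show ?thesis .
qed

lemma powr_split: "(x::real) powr c = x powr a * x powr (c - a)" 
  by (metis powr_add add_diff_cancel_left' diff_add_cancel add.commute)

lemma split_pow:
  fixes x y c a :: real
  assumes "x > 0" "y > 0" "0 \<le> c - a" and that: "x \<le> y"
  shows "x powr c \<le> x powr a * y powr (c - a)"
proof -
  have "x powr c = x powr a * x powr (c - a)" using powr_split[of x c a] by simp
  also have "\<dots> \<le> x powr a * y powr (c - a)" using assms that by (intro mult_left_mono powr_mono2) auto
  finally show ?thesis .
qed

lemma FP:
  assumes hs: "\<bar>\<sigma>\<bar> \<le> \<bar>h\<bar>" and a0: "0 < a" and a1: "a \<le> 1" and ap: "a \<le> pp"
  shows "\<bar>FF h \<sigma>\<bar> \<le> (12 * KK) * \<bar>\<sigma>\<bar> powr a * \<bar>h\<bar> powr (pp - a)"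
proof (cases "\<sigma> = 0")
  case True then show ?thesis using u0 by (simp add: FF_def)
next
  case s0: False
  then have h0: "h \<noteq> 0" using hs by auto
  show ?thesis
  proof (cases "2 * \<bar>\<sigma>\<bar> \<le> \<bar>h\<bar>")
    case True
    have m: "\<bar>u (h+\<sigma>) - u h\<bar> \<le> (KK * (2 * \<bar>h\<bar> powr (pp - 1))) * \<bar>(h+\<sigma>) - h\<bar>"
    proof (rule mvt_bound[OF u_der])
      fix t assume t: "min h (h+\<sigma>) \<le> t" "t \<le> max h (h+\<sigma>)"
      have tl: "\<bar>h\<bar> / 2 \<le> \<bar>t\<bar>" and tu: "\<bar>t\<bar> \<le> 3 * \<bar>h\<bar> / 2"
        using t True by (auto simp: abs_le_iff min_def max_def split: if_splits)
      have t0: "t \<noteq> 0" using tl h0 by auto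
      have "(\<bar>t\<bar> / \<bar>h\<bar>) powr (pp - 1) \<le> 2"
        using tl tu h0 p0 p2 by (intro ratio_pow_le2) (auto simp: field_simps)
      then have "\<bar>t\<bar> powr (pp - 1) \<le> 2 * \<bar>h\<bar> powr (pp - 1)"
        using h0 by (simp add: powr_divide divide_le_eq)
      then show "\<bar>deriv u t\<bar> \<le> KK * (2 * \<bar>h\<bar> powr (pp - 1))"
        using du_p[OF t0] K2 by (meson mult_left_mono order_trans le_less_trans less_imp_le zero_less_numeral order.strict_trans1)
    qed
    have k1: "\<bar>\<sigma>\<bar> * \<bar>h\<bar> powr (pp - 1) \<le> \<bar>\<sigma>\<bar> powr a * \<bar>h\<bar> powr (pp - a)"
    proof -
      have "\<bar>\<sigma>\<bar> = \<bar>\<sigma>\<bar> powr 1" using s0 by simp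
      also have "\<dots> \<le> \<bar>\<sigma>\<bar> powr a * \<bar>h\<bar> powr (1 - a)" using s0 h0 hs a1 by (intro split_pow) auto
      finally have "\<bar>\<sigma>\<bar> * \<bar>h\<bar> powr (pp - 1) \<le> \<bar>\<sigma>\<bar> powr a * \<bar>h\<bar> powr (1 - a) * \<bar>h\<bar> powr (pp - 1)"
        by (intro mult_right_mono) auto
      also have "\<dots> = \<bar>\<sigma>\<bar> powr a * \<bar>h\<bar> powr (pp - a)" using powr_split[of "\<bar>h\<bar>" "pp - a" "1 - a"] by (simp add: mult.assoc)
      finally show ?thesis .
    qed
    have k2: "u \<sigma> \<le> KK * (\<bar>\<sigma>\<bar> powr a * \<bar>h\<bar> powr (pp - a))"
    proof -
      have "\<bar>\<sigma>\<bar> powr pp \<le> \<bar>\<sigma>\<bar> powr a * \<bar>h\<bar> powr (pp - a)" using s0 h0 hs ap by (intro split_pow) auto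
      then show ?thesis using u_le_p[of \<sigma>] K2 by (meson mult_left_mono order_trans less_imp_le zero_less_numeral order.strict_trans1)
    qed
    have "\<bar>FF h \<sigma>\<bar> \<le> 2 * KK * (\<bar>\<sigma>\<bar> * \<bar>h\<bar> powr (pp - 1)) + KK * (\<bar>\<sigma>\<bar> powr a * \<bar>h\<bar> powr (pp - a))"
      using F_le_sum[of h \<sigma>] m k2 by (simp add: algebra_simps)
    also have "\<dots> \<le> 2 * KK * (\<bar>\<sigma>\<bar> powr a * \<bar>h\<bar> powr (pp - a)) + KK * (\<bar>\<sigma>\<bar> powr a * \<bar>h\<bar> powr (pp - a))"
      using k1 K2 by (intro add_right_mono mult_left_mono) auto
    also have "\<dots> \<le> (12 * KK) * \<bar>\<sigma>\<bar> powr a * \<bar>h\<bar> powr (pp - a)"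
      using K2 by (simp add: algebra_simps)
    finally show ?thesis .
  next
    case False
    have hp: "\<bar>h\<bar> powr pp \<le> 2 * (\<bar>\<sigma>\<bar> powr a * \<bar>h\<bar> powr (pp - a))"
    proof -
      have e: "\<bar>h\<bar> powr pp = \<bar>h\<bar> powr a * \<bar>h\<bar> powr (pp - a)" by (rule powr_split)
      have "\<bar>h\<bar> powr a \<le> (2 * \<bar>\<sigma>\<bar>) powr a"
        using False a0 by (intro powr_mono2) auto
      also have "(2 * \<bar>\<sigma>\<bar>) powr a = 2 powr a * \<bar>\<sigma>\<bar> powr a" by (simp add: powr_mult)
      also have "\<dots> \<le> 2 * \<bar>\<sigma>\<bar> powr a"
      proof -
        have "2 powr a \<le> 2 powr 1" using a1 by (intro powr_mono) auto
        then show ?thesis by (intro mult_right_mono) auto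
      qed
      finally have "\<bar>h\<bar> powr a \<le> 2 * \<bar>\<sigma>\<bar> powr a" .
      then have "\<bar>h\<bar> powr a * \<bar>h\<bar> powr (pp - a) \<le> (2 * \<bar>\<sigma>\<bar> powr a) * \<bar>h\<bar> powr (pp - a)"
        by (intro mult_right_mono) auto
      then show ?thesis using e by (simp add: mult.assoc)
    qed
    have u1: "u (h + \<sigma>) \<le> 4 * KK * \<bar>h\<bar> powr pp"
    proof -
      have "\<bar>h + \<sigma>\<bar> powr pp \<le> (2 * \<bar>h\<bar>) powr pp" using hs p0 by (intro powr_mono2) auto
      also have "\<dots> = 2 powr pp * \<bar>h\<bar> powr pp" by (simp add: powr_mult)
      also have "\<dots> \<le> 4 * \<bar>h\<bar> powr pp"
      proof -
        have "2 powr pp \<le> 2 powr 2" using p2 by (intro powr_mono) auto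
        then show ?thesis by (intro mult_right_mono) auto
      qed
      finally have "\<bar>h + \<sigma>\<bar> powr pp \<le> 4 * \<bar>h\<bar> powr pp" .
      then have "KK * \<bar>h + \<sigma>\<bar> powr pp \<le> KK * (4 * \<bar>h\<bar> powr pp)" using K2 by (intro mult_left_mono) auto
      then show ?thesis using u_le_p[of "h+\<sigma>"] by simp
    qed
    have u3: "u \<sigma> \<le> KK * \<bar>h\<bar> powr pp"
    proof -
      have "\<bar>\<sigma>\<bar> powr pp \<le> \<bar>h\<bar> powr pp" using hs p0 by (intro powr_mono2) auto
      then show ?thesis using u_le_p[of \<sigma>] K2 by (meson mult_left_mono order_trans less_imp_le zero_less_numeral order.strict_trans1)
    qed
    have "\<bar>FF h \<sigma>\<bar> \<le> 6 * KK * \<bar>h\<bar> powr pp"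
      using F_le_sum3[of h \<sigma>] u1 u3 u_le_p[of h] by simp
    also have "\<dots> \<le> 6 * KK * (2 * (\<bar>\<sigma>\<bar> powr a * \<bar>h\<bar> powr (pp - a)))"
      using hp K2 by (intro mult_left_mono) auto
    also have "\<dots> = (12 * KK) * \<bar>\<sigma>\<bar> powr a * \<bar>h\<bar> powr (pp - a)" by simp
    finally show ?thesis .
  qed
qed

end


context tset begin

definition "eta = min \<beta> (2 - \<beta>) / 4"
definition "aa = \<beta> / 2 + eta"

lemma eta0: "0 < eta" and eta_b: "eta \<le> \<beta> / 4" and eta_b2: "eta \<le> (2 - \<beta>) / 4"
  using b0 b2 by (auto simp: eta_def)

lemma aa0: "0 < aa" and aa1: "aa \<le> 1" using eta0 eta_b2 b0 by (auto simp: aa_def)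

lemma aap: assumes "\<epsilon> \<le> \<beta> / 4" shows "aa \<le> pp"
  using assms eta_b by (auto simp: aa_def pp_def)

definition "gg = (\<lambda>(h::real, \<sigma>::real). (if \<bar>\<sigma>\<bar> \<le> \<bar>h\<bar> then 1 else 0) *
   (if \<bar>h\<bar> \<le> 1 then CQ\<^sup>2 * \<bar>\<sigma>\<bar> powr (2 * 1 - (1+\<beta>)) * \<bar>h\<bar> powr (2 * (qq - 1) - (1+\<beta>))
    else (12 * KK)\<^sup>2 * \<bar>\<sigma>\<bar> powr (2 * aa - (1+\<beta>)) * \<bar>h\<bar> powr (2 * (pp - aa) - (1+\<beta>))))"

lemma gg_nonneg: "0 \<le> gg (h, \<sigma>)" by (simp add: gg_def)

lemma G2_FF: "G2_integrand \<beta> u 0 (h, \<sigma>) = (FF h \<sigma>)\<^sup>2 / (\<bar>h\<bar> powr (1 + \<beta>) * \<bar>\<sigma>\<bar> powr (1 + \<beta>))"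
  by (simp add: G2_integrand_def FF_def u0 add.assoc)

lemma FF_sym: "FF h \<sigma> = FF \<sigma> h" by (simp add: FF_def add.commute)

lemma G2_le_gg_half:
  assumes hs: "\<bar>\<sigma>\<bar> \<le> \<bar>h\<bar>" and e4: "\<epsilon> \<le> \<beta> / 4"
  shows "(FF h \<sigma>)\<^sup>2 / (\<bar>h\<bar> powr (1 + \<beta>) * \<bar>\<sigma>\<bar> powr (1 + \<beta>)) \<le> gg (h, \<sigma>)"
proof (cases "\<sigma> = 0")
  case True then show ?thesis using gg_nonneg[of h \<sigma>] by simp
next
  case s0: False
  then have h0: "h \<noteq> 0" using hs by auto
  show ?thesis
  proof (cases "\<bar>h\<bar> \<le> 1")
    case True
    have "\<bar>FF h \<sigma>\<bar> \<le> CQ * \<bar>\<sigma>\<bar> powr 1 * \<bar>h\<bar> powr (qq - 1)" using FQ[OF hs] s0 by simp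
    from sq_div_bound[OF this] s0 h0
    show ?thesis using True hs by (simp add: gg_def)
  next
    case False
    have "\<bar>FF h \<sigma>\<bar> \<le> (12 * KK) * \<bar>\<sigma>\<bar> powr aa * \<bar>h\<bar> powr (pp - aa)"
      using FP[OF hs aa0 aa1 aap[OF e4]] .
    from sq_div_bound[OF this] s0 h0
    show ?thesis using False hs by (simp add: gg_def)
  qed
qed

lemma G2_le_gg:
  assumes e4: "\<epsilon> \<le> \<beta> / 4"
  shows "G2_integrand \<beta> u 0 (h, \<sigma>) \<le> gg (h, \<sigma>) + gg (\<sigma>, h)"
proof (cases "\<bar>\<sigma>\<bar> \<le> \<bar>h\<bar>")
  case True
  then show ?thesis using G2_le_gg_half[OF True e4] gg_nonneg[of \<sigma> h] by (simp add: G2_FF)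
next
  case False
  then have hs: "\<bar>h\<bar> \<le> \<bar>\<sigma>\<bar>" by simp
  have "G2_integrand \<beta> u 0 (h, \<sigma>) = (FF \<sigma> h)\<^sup>2 / (\<bar>\<sigma>\<bar> powr (1 + \<beta>) * \<bar>h\<bar> powr (1 + \<beta>))"
    by (simp add: G2_FF FF_sym mult.commute)
  then show ?thesis using G2_le_gg_half[OF hs e4] gg_nonneg[of h \<sigma>] by simp
qed

end


lemma inner_int:
  fixes c r K M :: real
  assumes "c > -1" "r \<ge> 0" "K \<ge> 0" "M \<ge> 0"
  shows "(\<integral>\<^sup>+\<sigma>. ennreal ((if \<bar>\<sigma>\<bar> \<le> r then 1 else 0) * (K * \<bar>\<sigma>\<bar> powr c * M)) \<partial>lborel)
      \<le> ennreal (K * M * (2 * (r powr (c+1) / (c+1))))"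
proof -
  have "(\<integral>\<^sup>+\<sigma>. ennreal ((if \<bar>\<sigma>\<bar> \<le> r then 1 else 0) * (K * \<bar>\<sigma>\<bar> powr c * M)) \<partial>lborel)
      = (\<integral>\<^sup>+\<sigma>. ennreal (K * M) * ennreal (indicator {..r} \<bar>\<sigma>\<bar> * \<bar>\<sigma>\<bar> powr c) \<partial>lborel)"
    using assms by (intro nn_integral_cong) (auto simp: indicator_def ennreal_mult[symmetric] mult_ac)
  also have "\<dots> = ennreal (K * M) * (\<integral>\<^sup>+\<sigma>. ennreal (indicator {..r} \<bar>\<sigma>\<bar> * \<bar>\<sigma>\<bar> powr c) \<partial>lborel)"
    by (rule nn_integral_cmult) measurable
  also have "\<dots> \<le> ennreal (K * M) * ennreal (2 * (r powr (c+1) / (c+1)))"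
    using int_ball_pow[OF assms(1,2)] by (intro mult_left_mono) auto
  also have "\<dots> = ennreal (K * M * (2 * (r powr (c+1) / (c+1))))"
    using assms by (simp add: ennreal_mult[symmetric])
  finally show ?thesis .
qed

context tset begin

definition "A1 = CQ\<^sup>2 * (2 / (2 - \<beta>))"
definition "A2 = (12 * KK)\<^sup>2 / eta"
definition "Hf h = (if \<bar>h\<bar> \<le> 1 then A1 * \<bar>h\<bar> powr (2 * \<delta> - 1) else A2 * \<bar>h\<bar> powr (-1 - 2 * \<epsilon>))"

lemma gg_meas[measurable]: "gg \<in> borel_measurable (lborel \<Otimes>\<^sub>M lborel)"
  unfolding gg_def by measurable

lemma inner_gg: "(\<integral>\<^sup>+\<sigma>. ennreal (gg (h, \<sigma>)) \<partial>lborel) \<le> ennreal (Hf h)"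
proof (cases "\<bar>h\<bar> \<le> 1")
  case True
  have "(\<integral>\<^sup>+\<sigma>. ennreal (gg (h, \<sigma>)) \<partial>lborel)
     = (\<integral>\<^sup>+\<sigma>. ennreal ((if \<bar>\<sigma>\<bar> \<le> \<bar>h\<bar> then 1 else 0) * (CQ\<^sup>2 * \<bar>\<sigma>\<bar> powr (2 * 1 - (1+\<beta>)) * \<bar>h\<bar> powr (2 * (qq - 1) - (1+\<beta>)))) \<partial>lborel)"
    using True by (simp add: gg_def)
  also have "\<dots> \<le> ennreal (CQ\<^sup>2 * \<bar>h\<bar> powr (2 * (qq - 1) - (1+\<beta>)) * (2 * (\<bar>h\<bar> powr ((2 * 1 - (1+\<beta>))+1) / ((2 * 1 - (1+\<beta>))+1))))"
    using b2 by (intro inner_int) auto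
  also have "CQ\<^sup>2 * \<bar>h\<bar> powr (2 * (qq - 1) - (1+\<beta>)) * (2 * (\<bar>h\<bar> powr ((2 * 1 - (1+\<beta>))+1) / ((2 * 1 - (1+\<beta>))+1)))
     = A1 * (\<bar>h\<bar> powr (2 * (qq - 1) - (1+\<beta>)) * \<bar>h\<bar> powr ((2 * 1 - (1+\<beta>))+1))"
    by (simp add: A1_def)
  also have "\<bar>h\<bar> powr (2 * (qq - 1) - (1+\<beta>)) * \<bar>h\<bar> powr ((2 * 1 - (1+\<beta>))+1) = \<bar>h\<bar> powr (2 * \<delta> - 1)"
    by (simp add: powr_add[symmetric] qq_def algebra_simps)
  finally show ?thesis using True by (simp add: Hf_def)
next
  case False
  have "(\<integral>\<^sup>+\<sigma>. ennreal (gg (h, \<sigma>)) \<partial>lborel)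
     = (\<integral>\<^sup>+\<sigma>. ennreal ((if \<bar>\<sigma>\<bar> \<le> \<bar>h\<bar> then 1 else 0) * ((12 * KK)\<^sup>2 * \<bar>\<sigma>\<bar> powr (2 * aa - (1+\<beta>)) * \<bar>h\<bar> powr (2 * (pp - aa) - (1+\<beta>)))) \<partial>lborel)"
    using False by (simp add: gg_def)
  also have "\<dots> \<le> ennreal ((12 * KK)\<^sup>2 * \<bar>h\<bar> powr (2 * (pp - aa) - (1+\<beta>)) * (2 * (\<bar>h\<bar> powr ((2 * aa - (1+\<beta>))+1) / ((2 * aa - (1+\<beta>))+1))))"
    using eta0 by (intro inner_int) (auto simp: aa_def)
  also have "(12 * KK)\<^sup>2 * \<bar>h\<bar> powr (2 * (pp - aa) - (1+\<beta>)) * (2 * (\<bar>h\<bar> powr ((2 * aa - (1+\<beta>))+1) / ((2 * aa - (1+\<beta>))+1)))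
     = A2 * (\<bar>h\<bar> powr (2 * (pp - aa) - (1+\<beta>)) * \<bar>h\<bar> powr ((2 * aa - (1+\<beta>))+1))"
    using eta0 by (simp add: A2_def aa_def field_simps)
  also have "\<bar>h\<bar> powr (2 * (pp - aa) - (1+\<beta>)) * \<bar>h\<bar> powr ((2 * aa - (1+\<beta>))+1) = \<bar>h\<bar> powr (-1 - 2 * \<epsilon>)"
    by (simp add: powr_add[symmetric] pp_def algebra_simps)
  finally show ?thesis using False by (simp add: Hf_def)
qed

end


context tset begin

lemma u_meas[measurable]: "u \<in> borel_measurable borel"
  using u_cont by (intro borel_measurable_continuous_onI continuous_at_imp_continuous_on) auto

lemma G2_meas[measurable]: "G2_integrand \<beta> u 0 \<in> borel_measurable (lborel \<Otimes>\<^sub>M lborel)"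
  unfolding G2_integrand_def by measurable

lemma L_meas[measurable]: "L_integrand \<beta> u 0 \<in> borel_measurable lborel"
  unfolding L_integrand_def by measurable

lemma A1_nn: "0 \<le> A1" and A2_nn: "0 \<le> A2"
  using b2 eta0 by (auto simp: A1_def A2_def)

definition "BB = A1 * (2 * (1 / (2 * \<delta>))) + A2 * (2 * (1 / (2 * \<epsilon>)))"

lemma outer_Hf: "(\<integral>\<^sup>+h. ennreal (Hf h) \<partial>lborel) \<le> ennreal BB"
proof -
  have "(\<integral>\<^sup>+h. ennreal (Hf h) \<partial>lborel) = (\<integral>\<^sup>+h. ennreal A1 * ennreal (indicator {..1} \<bar>h\<bar> * \<bar>h\<bar> powr (2 * \<delta> - 1))
        + ennreal A2 * ennreal (indicator {1<..} \<bar>h\<bar> * \<bar>h\<bar> powr (-1 - 2 * \<epsilon>)) \<partial>lborel)"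
    using A1_nn A2_nn by (intro nn_integral_cong) (auto simp: Hf_def indicator_def ennreal_mult[symmetric])
  also have "\<dots> = ennreal A1 * (\<integral>\<^sup>+h. ennreal (indicator {..1} \<bar>h\<bar> * \<bar>h\<bar> powr (2 * \<delta> - 1)) \<partial>lborel)
        + ennreal A2 * (\<integral>\<^sup>+h. ennreal (indicator {1<..} \<bar>h\<bar> * \<bar>h\<bar> powr (-1 - 2 * \<epsilon>)) \<partial>lborel)"
    by (subst nn_integral_add) (auto simp: nn_integral_cmult)
  also have "\<dots> \<le> ennreal A1 * ennreal (2 * (1 powr ((2 * \<delta> - 1) + 1) / ((2 * \<delta> - 1) + 1)))
        + ennreal A2 * ennreal (2 * (-1 / ((-1 - 2 * \<epsilon>) + 1)))"
    using d0 e0 by (intro add_mono mult_left_mono int_ball_pow int_out_pow) auto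
  also have "\<dots> = ennreal BB"
  proof -
    have X: "2 * (1 powr ((2 * \<delta> - 1) + 1) / ((2 * \<delta> - 1) + 1)) = 2 * (1 / (2 * \<delta>))" by simp
    have Y: "2 * (-1 / ((-1 - 2 * \<epsilon>) + 1)) = 2 * (1 / (2 * \<epsilon>))" by simp
    have nn: "0 \<le> 2 * (1 / (2 * \<delta>))" "0 \<le> 2 * (1 / (2 * \<epsilon>))" using d0 e0 by auto
    show ?thesis unfolding BB_def X Y using A1_nn A2_nn nn
      by (simp only: ennreal_mult[symmetric] ennreal_plus[symmetric] mult_nonneg_nonneg)
  qed
  finally show ?thesis .
qed

lemma G2_nn_bound:
  assumes e4: "\<epsilon> \<le> \<beta> / 4"
  shows "(\<integral>\<^sup>+p. ennreal (G2_integrand \<beta> u 0 p) \<partial>(lborel \<Otimes>\<^sub>M lborel)) \<le> ennreal (2 * BB)"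
proof -
  have "(\<integral>\<^sup>+p. ennreal (G2_integrand \<beta> u 0 p) \<partial>(lborel \<Otimes>\<^sub>M lborel))
     \<le> (\<integral>\<^sup>+p. ennreal (gg p) + ennreal (gg (snd p, fst p)) \<partial>(lborel \<Otimes>\<^sub>M lborel))"
    using G2_le_gg[OF e4] gg_nonneg
    by (intro nn_integral_mono) (metis ennreal_leI ennreal_plus prod.collapse)
  also have "\<dots> = (\<integral>\<^sup>+p. ennreal (gg p) \<partial>(lborel \<Otimes>\<^sub>M lborel)) + (\<integral>\<^sup>+p. ennreal (gg (snd p, fst p)) \<partial>(lborel \<Otimes>\<^sub>M lborel))"
    by (rule nn_integral_add) measurable
  also have "(\<integral>\<^sup>+p. ennreal (gg p) \<partial>(lborel \<Otimes>\<^sub>M lborel)) = (\<integral>\<^sup>+h. \<integral>\<^sup>+\<sigma>. ennreal (gg (h, \<sigma>)) \<partial>lborel \<partial>lborel)"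
    by (rule lborel.nn_integral_fst[symmetric]) measurable
  also have "(\<integral>\<^sup>+p. ennreal (gg (snd p, fst p)) \<partial>(lborel \<Otimes>\<^sub>M lborel)) = (\<integral>\<^sup>+\<sigma>. \<integral>\<^sup>+h. ennreal (gg (\<sigma>, h)) \<partial>lborel \<partial>lborel)"
    by (subst pair_sigma_finite.nn_integral_snd[symmetric]) (auto simp: pair_sigma_finite_def lborel.sigma_finite_measure_axioms)
  also have "(\<integral>\<^sup>+h. \<integral>\<^sup>+\<sigma>. ennreal (gg (h, \<sigma>)) \<partial>lborel \<partial>lborel) \<le> ennreal BB"
    using inner_gg outer_Hf by (meson nn_integral_mono order_trans)
  then have "(\<integral>\<^sup>+h. \<integral>\<^sup>+\<sigma>. ennreal (gg (h, \<sigma>)) \<partial>lborel \<partial>lborel) + (\<integral>\<^sup>+\<sigma>. \<integral>\<^sup>+h. ennreal (gg (\<sigma>, h)) \<partial>lborel \<partial>lborel) \<le> ennreal BB + ennreal BB"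
    by (intro add_mono)
  also have "ennreal BB + ennreal BB = ennreal (2 * BB)"
  proof -
    have "0 \<le> BB" using A1_nn A2_nn d0 e0 by (simp add: BB_def)
    then show ?thesis by (simp only: mult_2 ennreal_plus)
  qed
  finally show ?thesis by simp
qed

end


context tset begin

lemma L_eq: "L_integrand \<beta> u 0 h = 2 * u h / \<bar>h\<bar> powr (1 + \<beta>)"
  by (simp add: L_integrand_def u0 u_even[of h, symmetric])

lemma L_nonneg: "0 \<le> L_integrand \<beta> u 0 h"
  using u_nonneg[of h] by (simp add: L_eq)

definition "LB = 2 * KK * (2 * (1 / \<delta>) + 2 * (1 / \<epsilon>))"

lemma L_upper_pt: "L_integrand \<beta> u 0 h \<le>
   2 * KK * (indicator {..1} \<bar>h\<bar> * \<bar>h\<bar> powr (\<delta> - 1) + indicator {1<..} \<bar>h\<bar> * \<bar>h\<bar> powr (-1 - \<epsilon>))"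
proof (cases "h = 0")
  case True then show ?thesis using u0 by (simp add: L_eq)
next
  case h0: False
  show ?thesis
  proof (cases "\<bar>h\<bar> \<le> 1")
    case True
    have "L_integrand \<beta> u 0 h \<le> 2 * (KK * \<bar>h\<bar> powr qq) / \<bar>h\<bar> powr (1 + \<beta>)"
      unfolding L_eq using u_le_q[of h] by (intro divide_right_mono mult_left_mono) auto
    also have "\<dots> = 2 * KK * (\<bar>h\<bar> powr qq / \<bar>h\<bar> powr (1 + \<beta>))" by simp
    also have "\<bar>h\<bar> powr qq / \<bar>h\<bar> powr (1 + \<beta>) = \<bar>h\<bar> powr (\<delta> - 1)"
      by (simp add: powr_diff[symmetric] qq_def algebra_simps)
    finally show ?thesis using True by simp
  next
    case False
    have "L_integrand \<beta> u 0 h \<le> 2 * (KK * \<bar>h\<bar> powr pp) / \<bar>h\<bar> powr (1 + \<beta>)"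
      unfolding L_eq using u_le_p[of h] by (intro divide_right_mono mult_left_mono) auto
    also have "\<dots> = 2 * KK * (\<bar>h\<bar> powr pp / \<bar>h\<bar> powr (1 + \<beta>))" by simp
    also have "\<bar>h\<bar> powr pp / \<bar>h\<bar> powr (1 + \<beta>) = \<bar>h\<bar> powr (-1 - \<epsilon>)"
      by (simp add: powr_diff[symmetric] pp_def algebra_simps)
    finally show ?thesis using False by simp
  qed
qed

lemma L_lower_pt: "2 * (indicator {1..} \<bar>h\<bar> * \<bar>h\<bar> powr (-1 - \<epsilon>)) \<le> L_integrand \<beta> u 0 h"
proof (cases "\<bar>h\<bar> \<ge> 1")
  case True
  have "L_integrand \<beta> u 0 h = 2 * (\<bar>h\<bar> powr pp / \<bar>h\<bar> powr (1 + \<beta>))"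
    using True by (simp add: L_eq u_out)
  also have "\<bar>h\<bar> powr pp / \<bar>h\<bar> powr (1 + \<beta>) = \<bar>h\<bar> powr (-1 - \<epsilon>)"
    by (simp add: powr_diff[symmetric] pp_def algebra_simps)
  finally show ?thesis using True by simp
next
  case False then show ?thesis using L_nonneg[of h] by simp
qed

lemma L_nn_upper: "(\<integral>\<^sup>+h. ennreal (L_integrand \<beta> u 0 h) \<partial>lborel) \<le> ennreal LB"
proof -
  have "(\<integral>\<^sup>+h. ennreal (L_integrand \<beta> u 0 h) \<partial>lborel)
     \<le> (\<integral>\<^sup>+h. ennreal (2 * KK) * ennreal (indicator {..1} \<bar>h\<bar> * \<bar>h\<bar> powr (\<delta> - 1))
        + ennreal (2 * KK) * ennreal (indicator {1<..} \<bar>h\<bar> * \<bar>h\<bar> powr (-1 - \<epsilon>)) \<partial>lborel)"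
  proof (intro nn_integral_mono)
    fix h
    have "ennreal (L_integrand \<beta> u 0 h) \<le> ennreal (2 * KK * (indicator {..1} \<bar>h\<bar> * \<bar>h\<bar> powr (\<delta> - 1) + indicator {1<..} \<bar>h\<bar> * \<bar>h\<bar> powr (-1 - \<epsilon>)))"
      by (intro ennreal_leI L_upper_pt)
    also have "\<dots> = ennreal (2 * KK) * ennreal (indicator {..1} \<bar>h\<bar> * \<bar>h\<bar> powr (\<delta> - 1))
        + ennreal (2 * KK) * ennreal (indicator {1<..} \<bar>h\<bar> * \<bar>h\<bar> powr (-1 - \<epsilon>))"
      using K2 by (simp only: distrib_left ennreal_plus ennreal_mult mult_nonneg_nonneg
         indicator_pos_le powr_ge_zero zero_le_mult_iff) (auto simp: ennreal_mult ennreal_plus)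
    finally show "ennreal (L_integrand \<beta> u 0 h) \<le> \<dots>" .
  qed
  also have "\<dots> = ennreal (2 * KK) * (\<integral>\<^sup>+h. ennreal (indicator {..1} \<bar>h\<bar> * \<bar>h\<bar> powr (\<delta> - 1)) \<partial>lborel)
        + ennreal (2 * KK) * (\<integral>\<^sup>+h. ennreal (indicator {1<..} \<bar>h\<bar> * \<bar>h\<bar> powr (-1 - \<epsilon>)) \<partial>lborel)"
    by (subst nn_integral_add) (auto simp: nn_integral_cmult)
  also have "\<dots> \<le> ennreal (2 * KK) * ennreal (2 * (1 powr ((\<delta> - 1) + 1) / ((\<delta> - 1) + 1)))
        + ennreal (2 * KK) * ennreal (2 * (-1 / ((-1 - \<epsilon>) + 1)))"
    using d0 e0 by (intro add_mono mult_left_mono int_ball_pow int_out_pow) auto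
  also have "\<dots> = ennreal LB"
  proof -
    have X: "2 * (1 powr ((\<delta> - 1) + 1) / ((\<delta> - 1) + 1)) = 2 * (1 / \<delta>)" by simp
    have Y: "2 * (-1 / ((-1 - \<epsilon>) + 1)) = 2 * (1 / \<epsilon>)" by simp
    have nn: "0 \<le> 2 * (1 / \<delta>)" "0 \<le> 2 * (1 / \<epsilon>)" "0 \<le> 2 * KK" using d0 e0 K2 by auto
    show ?thesis unfolding LB_def X Y using nn
      by (simp only: ennreal_mult[symmetric] ennreal_plus[symmetric] mult_nonneg_nonneg distrib_left)
  qed
  finally show ?thesis .
qed

lemma L_integrable: "integrable lborel (L_integrand \<beta> u 0)"
  using L_nn_upper L_nonneg by (intro integrableI_nonneg) (auto simp: order_le_less_trans)

lemma L_int_lower: "2 / \<epsilon> \<le> (\<integral>h. L_integrand \<beta> u 0 h \<partial>lborel)"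
proof -
  have "ennreal (2 * (-1 / ((-1 - \<epsilon>) + 1))) = 2 * ennreal (-1 / ((-1 - \<epsilon>) + 1))"
    using e0 by (intro two_ennreal[symmetric]) (auto simp: field_simps)
  also have "\<dots> \<le> 2 * (\<integral>\<^sup>+h. ennreal (indicator {1..} \<bar>h\<bar> * \<bar>h\<bar> powr (-1 - \<epsilon>)) \<partial>lborel)"
    using e0 by (intro mult_left_mono int_out_pow_ge) auto
  also have "\<dots> = (\<integral>\<^sup>+h. ennreal (2 * (indicator {1..} \<bar>h\<bar> * \<bar>h\<bar> powr (-1 - \<epsilon>))) \<partial>lborel)"
    by (subst nn_integral_cmult[symmetric]) (auto intro!: nn_integral_cong simp: ennreal_mult)
  also have "\<dots> \<le> (\<integral>\<^sup>+h. ennreal (L_integrand \<beta> u 0 h) \<partial>lborel)"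
    by (intro nn_integral_mono ennreal_leI L_lower_pt)
  finally have 1: "ennreal (2 / \<epsilon>) \<le> (\<integral>\<^sup>+h. ennreal (L_integrand \<beta> u 0 h) \<partial>lborel)"
    using e0 by simp
  have "(\<integral>h. L_integrand \<beta> u 0 h \<partial>lborel) = enn2real (\<integral>\<^sup>+h. ennreal (L_integrand \<beta> u 0 h) \<partial>lborel)"
    using L_nonneg by (intro integral_eq_nn_integral) auto
  moreover have "(\<integral>\<^sup>+h. ennreal (L_integrand \<beta> u 0 h) \<partial>lborel) < top"
    using L_nn_upper by (auto simp: order_le_less_trans)
  ultimately show ?thesis using 1 e0
    by (metis enn2real_ennreal enn2real_mono less_imp_le divide_nonneg_pos zero_le_numeral)
qed

end


lemma c_beta_pos:
  assumes "0 < \<beta>" "\<beta> < 2"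
  shows "0 < c_beta \<beta>"
proof -
  have g1: "Gamma ((1 + \<beta>) / 2) > 0" using assms by (intro Gamma_real_pos) auto
  have "Gamma (- \<beta> / 2) \<noteq> 0"
  proof
    assume "Gamma (- \<beta> / 2) = 0"
    then have "- \<beta> / 2 \<in> \<int>\<^sub>\<le>\<^sub>0" by (simp add: Gamma_eq_zero_iff)
    then obtain n :: nat where n: "- \<beta> / 2 = - of_nat n" by (elim nonpos_Ints_cases')
    then have "real n = \<beta> / 2" by simp
    then have "0 < real n" "real n < 1" using assms by auto
    then show False by (cases n) auto
  qed
  then have g2: "\<bar>Gamma (- \<beta> / 2)\<bar> > 0" by simp
  show ?thesis unfolding c_beta_def using g1 g2 by (intro divide_pos_pos mult_pos_pos) auto
qed

context tset begin

lemma FF22: "FF 2 2 \<noteq> 0"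
proof -
  have "FF 2 2 = u 4 - 2 * u 2" by (simp add: FF_def)
  also have "\<dots> = 4 powr pp - 2 * 2 powr pp" by (simp add: u_out)
  also have "4 powr pp = 2 powr pp * 2 powr pp" using powr_mult[of 2 2 pp] by simp
  finally have e: "FF 2 2 = 2 powr pp * (2 powr pp - 2)" by (simp add: algebra_simps)
  have "2 powr pp \<noteq> 2 powr 1" using p_ne1 by (subst powr_inj) auto
  then show ?thesis using e by simp
qed

lemma G2_nn_pos: "0 < (\<integral>\<^sup>+p. ennreal (G2_integrand \<beta> u 0 p) \<partial>(lborel \<Otimes>\<^sub>M lborel))"
proof -
  define F0 where "F0 = FF 2 2"
  define e where "e = \<bar>F0\<bar> / 3"
  have e0: "e > 0" using FF22 by (simp add: e_def F0_def)
  obtain d1 where d1: "d1 > 0" "\<And>x. dist x 4 < d1 \<Longrightarrow> dist (u x) (u 4) < e"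
    using u_cont[of 4] e0 unfolding continuous_at_eps_delta by blast
  obtain d2 where d2: "d2 > 0" "\<And>x. dist x 2 < d2 \<Longrightarrow> dist (u x) (u 2) < e"
    using u_cont[of 2] e0 unfolding continuous_at_eps_delta by blast
  define d where "d = min d1 d2 / 2"
  have d0: "d > 0" using d1 d2 by (simp add: d_def)
  define S where "S = {2<..<2+d} \<times> {2<..<2+d}"
  have pos: "0 < G2_integrand \<beta> u 0 p" if "p \<in> S" for p
  proof -
    obtain h \<sigma> where p: "p = (h, \<sigma>)" by (cases p)
    have hs: "2 < h" "h < 2 + d" "2 < \<sigma>" "\<sigma> < 2 + d" using that by (auto simp: S_def p)
    have a: "\<bar>u (h + \<sigma>) - u 4\<bar> < e" using d1(2)[of "h+\<sigma>"] hs by (auto simp: dist_real_def d_def)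
    have b: "\<bar>u h - u 2\<bar> < e" using d2(2)[of h] hs by (auto simp: dist_real_def d_def)
    have c: "\<bar>u \<sigma> - u 2\<bar> < e" using d2(2)[of \<sigma>] hs by (auto simp: dist_real_def d_def)
    have "\<bar>FF h \<sigma> - F0\<bar> < 3 * e" using a b c by (simp add: FF_def F0_def)
    then have "FF h \<sigma> \<noteq> 0" by (auto simp: e_def)
    then show ?thesis using hs by (simp add: G2_FF p)
  qed
  show ?thesis
  proof (rule ccontr)
    assume "\<not> ?thesis"
    then have "(\<integral>\<^sup>+p. ennreal (G2_integrand \<beta> u 0 p) \<partial>(lborel \<Otimes>\<^sub>M lborel)) = 0" by simp
    then have "AE p in lborel \<Otimes>\<^sub>M lborel. ennreal (G2_integrand \<beta> u 0 p) = 0"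
      by (subst (asm) nn_integral_0_iff_AE) auto
    then obtain N where N: "{p \<in> space (lborel \<Otimes>\<^sub>M lborel). \<not> ennreal (G2_integrand \<beta> u 0 p) = 0} \<subseteq> N"
        "emeasure (lborel \<Otimes>\<^sub>M lborel) N = 0" "N \<in> sets (lborel \<Otimes>\<^sub>M lborel)"
      by (elim AE_E)
    have "S \<subseteq> {p. ennreal (G2_integrand \<beta> u 0 p) \<noteq> 0}" using pos by (force simp: ennreal_eq_0_iff)
    then have "S \<subseteq> N" using N(1) by (auto simp: space_pair_measure)
    then have "emeasure (lborel \<Otimes>\<^sub>M lborel) S \<le> emeasure (lborel \<Otimes>\<^sub>M lborel) N"
      using N(3) by (intro emeasure_mono) auto
    moreover have "emeasure (lborel \<Otimes>\<^sub>M lborel) S = ennreal d * ennreal d"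
      unfolding S_def using d0 by (subst lborel.emeasure_pair_measure_Times) auto
    ultimately show False using N(2) d0 by (simp add: ennreal_mult[symmetric])
  qed
qed

lemma G2_integrable: assumes "\<epsilon> \<le> \<beta> / 4" shows "integrable (lborel \<Otimes>\<^sub>M lborel) (G2_integrand \<beta> u 0)"
  using G2_nn_bound[OF assms] by (intro integrableI_nonneg) (auto simp: G2_integrand_def order_le_less_trans)

lemma G2_int_eq: "(\<integral>p. G2_integrand \<beta> u 0 p \<partial>(lborel \<Otimes>\<^sub>M lborel)) = enn2real (\<integral>\<^sup>+p. ennreal (G2_integrand \<beta> u 0 p) \<partial>(lborel \<Otimes>\<^sub>M lborel))"
  by (intro integral_eq_nn_integral) (auto simp: G2_integrand_def)

lemma Gamma2_pos: assumes "\<epsilon> \<le> \<beta> / 4" shows "0 < Gamma2 \<beta> u 0"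
proof -
  have "0 < (\<integral>p. G2_integrand \<beta> u 0 p \<partial>(lborel \<Otimes>\<^sub>M lborel))"
    unfolding G2_int_eq enn2real_positive_iff using G2_nn_pos G2_nn_bound[OF assms]
    by (auto simp: order_le_less_trans)
  then show ?thesis using c_beta_pos[OF b0 b2] by (simp add: Gamma2_def)
qed

lemma Gamma2_upper: assumes "\<epsilon> \<le> \<beta> / 4" shows "Gamma2 \<beta> u 0 \<le> (c_beta \<beta>)\<^sup>2 * (2 * BB)"
proof -
  have "(\<integral>p. G2_integrand \<beta> u 0 p \<partial>(lborel \<Otimes>\<^sub>M lborel)) \<le> 2 * BB"
    unfolding G2_int_eq using G2_nn_bound[OF assms] A1_nn A2_nn d0 e0
    by (intro enn2real_leI) (auto simp: BB_def)
  then show ?thesis unfolding Gamma2_def by (intro mult_left_mono) auto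
qed

lemma fracL_lower: "c_beta \<beta> * (2 / \<epsilon>) \<le> frac_L \<beta> u 0"
  unfolding frac_L_def using L_int_lower c_beta_pos[OF b0 b2] by (intro mult_left_mono) auto

end


definition vv :: "real \<Rightarrow> real \<Rightarrow> real" where
  "vv p t = (if t \<in> {..<1} then (4-p)/2 * t + (p-2)/2 * t\<^sup>2 else t powr (p/2))"
definition dvv :: "real \<Rightarrow> real \<Rightarrow> real" where
  "dvv p t = (if t \<in> {..<1} then (4-p)/2 + 2*((p-2)/2)*t else p/2 * t powr (p/2 - 1))"
definition uf :: "real \<Rightarrow> real \<Rightarrow> real" where
  "uf p x = vv p (x\<^sup>2)"

lemma vv_der: "(vv p has_vector_derivative dvv p t) (at t)"
proof -
  have "((\<lambda>t. if t \<in> {..<1} then (4-p)/2 * t + (p-2)/2 * t\<^sup>2 else t powr (p/2)) has_vector_derivative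
     (if t \<in> {..<1} then (4-p)/2 + 2*((p-2)/2)*t else p/2 * t powr (p/2 - 1))) (at t within UNIV)"
  proof (rule has_vector_derivative_If_within_closures[where T="{1..}"])
    show "t \<in> {..<1} \<union> {1..}" by auto
    show "UNIV = {..<1} \<union> {1::real..}" by auto
  next
    assume "t \<in> {..<1} \<union> closure {..<1} \<inter> closure {1..}"
    have "((\<lambda>t. (4-p)/2 * t + (p-2)/2 * t\<^sup>2) has_real_derivative (4-p)/2 + 2*((p-2)/2)*t) (at t)"
      by (auto intro!: derivative_eq_intros simp: field_simps)
    then show "((\<lambda>t. (4-p)/2 * t + (p-2)/2 * t\<^sup>2) has_vector_derivative (4-p)/2 + 2*((p-2)/2)*t)
        (at t within {..<1} \<union> closure {..<1} \<inter> closure {1..})"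
      by (simp add: has_real_derivative_iff_has_vector_derivative has_vector_derivative_at_within)
  next
    assume t: "t \<in> {1..} \<union> closure {..<1} \<inter> closure {1..}"
    then have "t \<ge> 1" by auto
    then have "((\<lambda>t. t powr (p/2)) has_real_derivative p/2 * t powr (p/2 - 1)) (at t)"
      by (intro has_real_derivative_powr) auto
    then show "((\<lambda>t. t powr (p/2)) has_vector_derivative p/2 * t powr (p/2 - 1))
        (at t within {1..} \<union> closure {..<1} \<inter> closure {1..})"
      by (simp add: has_real_derivative_iff_has_vector_derivative has_vector_derivative_at_within)
  next
    assume "t \<in> closure {..<1}" "t \<in> closure {1..}"
    then have "t = 1" by auto
    then show "(4-p)/2 * t + (p-2)/2 * t\<^sup>2 = t powr (p/2)" by (simp add: field_simps)
  next
    assume "t \<in> closure {..<1}" "t \<in> closure {1..}"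
    then have "t = 1" by auto
    then show "(4-p)/2 + 2*((p-2)/2)*t = p/2 * t powr (p/2 - 1)" by simp argo
  qed
  then show ?thesis unfolding vv_def[abs_def] dvv_def by simp
qed

lemma dvv_cont: assumes "0 < p" shows "continuous_on UNIV (dvv p)"
proof -
  have e: "(4-p)/2 + 2*((p-2)/2) = p/2" by argo
  have "continuous_on ({..1} \<union> {1..}) (\<lambda>t. if t < 1 then (4-p)/2 + 2*((p-2)/2)*t else p/2 * t powr (p/2 - 1))"
  proof (intro continuous_on_cases continuous_intros)
    show "\<forall>t. t \<in> {..1} \<and> \<not> t < 1 \<or> t \<in> {1..} \<and> t < 1 \<longrightarrow>
         (4 - p) / 2 + 2 * ((p - 2) / 2) * t = p / 2 * t powr (p / 2 - 1)"
    proof (intro allI impI)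
      fix t :: real assume "t \<in> {..1} \<and> \<not> t < 1 \<or> t \<in> {1..} \<and> t < 1"
      then have t1: "t = 1" by auto
      show "(4 - p) / 2 + 2 * ((p - 2) / 2) * t = p / 2 * t powr (p / 2 - 1)"
        unfolding t1 by (simp only: powr_one_eq_one mult_1_right e)
    qed
  qed auto
  moreover have "{..1} \<union> {1::real..} = UNIV" by auto
  ultimately show ?thesis unfolding dvv_def[abs_def] by simp
qed

lemma uf_der: "(uf p has_real_derivative (2 * x * dvv p (x\<^sup>2))) (at x)"
proof -
  have "(vv p has_real_derivative dvv p (x\<^sup>2)) (at (x\<^sup>2))"
    using vv_der by (simp add: has_real_derivative_iff_has_vector_derivative)
  moreover have "((\<lambda>x. x\<^sup>2) has_real_derivative 2 * x) (at x)" by (auto intro!: derivative_eq_intros)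
  ultimately have "((\<lambda>x. vv p (x\<^sup>2)) has_real_derivative dvv p (x\<^sup>2) * (2 * x)) (at x)" by (rule DERIV_chain2)
  then show ?thesis unfolding uf_def[abs_def] by (simp add: mult_ac)
qed


lemma abs_powr2: "\<bar>x::real\<bar> powr 2 = x\<^sup>2"
  by (cases "x = 0") (auto simp: powr_realpow)

lemma uf_out: assumes "\<bar>x\<bar> \<ge> 1" shows "uf p x = \<bar>x\<bar> powr p"
proof -
  have "1 * 1 \<le> \<bar>x\<bar> * \<bar>x\<bar>" using assms by (intro mult_mono) auto
  then have "x\<^sup>2 \<ge> 1" by (simp add: power2_eq_square abs_mult_self_eq)
  then have "uf p x = (x\<^sup>2) powr (p/2)" by (simp add: uf_def vv_def)
  also have "(x\<^sup>2) powr (p/2) = (\<bar>x\<bar> powr 2) powr (p/2)" by (simp add: abs_powr2)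
  also have "(\<bar>x\<bar> powr 2) powr (p/2) = \<bar>x\<bar> powr p" by (subst powr_powr) simp
  finally show ?thesis .
qed

lemma uf_test:
  assumes b0: "0 < \<beta>" and b2: "\<beta> < 2" and adm: "admissible_eps \<beta> \<epsilon>"
  shows "test_fun \<beta> 8 (2 - \<beta>) \<epsilon> (uf (\<beta> - \<epsilon>))"
proof -
  define p where "p = \<beta> - \<epsilon>"
  have p0: "0 < p" and p2: "p < 2" using adm b0 b2 by (auto simp: p_def admissible_eps_def)
  have der: "(uf p has_real_derivative (2 * x * dvv p (x\<^sup>2))) (at x)" for x by (rule uf_der)
  have dd: "deriv (uf p) x = 2 * x * dvv p (x\<^sup>2)" for x using der by (rule DERIV_imp_deriv)
  have C1: "uf p C1_differentiable_on UNIV"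
    unfolding C1_differentiable_on_def
  proof (intro exI[of _ "\<lambda>x. 2 * x * dvv p (x\<^sup>2)"] conjI ballI)
    show "(uf p has_vector_derivative 2 * x * dvv p (x\<^sup>2)) (at x)" for x
      using der[of x] by (simp add: has_real_derivative_iff_has_vector_derivative)
    have "continuous_on UNIV (\<lambda>x. dvv p (x\<^sup>2))"
      by (rule continuous_on_compose2[OF dvv_cont[OF p0]]) (auto intro: continuous_intros)
    then show "continuous_on UNIV (\<lambda>x. 2 * x * dvv p (x\<^sup>2))" by (intro continuous_intros)
  qed
  have ev: "uf p (-x) = uf p x" for x by (simp add: uf_def)
  have bnd: "0 \<le> uf p x \<and> uf p x \<le> 8 * \<bar>x\<bar> powr (\<beta> + (2 - \<beta>))" if x1: "\<bar>x\<bar> \<le> 1" for x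
  proof -
    have y0: "0 \<le> x\<^sup>2" and y1: "x\<^sup>2 \<le> 1" using x1 by (auto simp: abs_square_le_1)
    show ?thesis
    proof (cases "x\<^sup>2 < 1")
      case True
      define y where "y = x\<^sup>2"
      have "uf p x = (4-p)/2 * y + (p-2)/2 * y\<^sup>2" using True by (simp add: uf_def vv_def y_def)
      moreover have "(p-2)/2 * 1 \<le> (p-2)/2 * y" using y1 p2 unfolding y_def by (intro mult_left_mono_neg) auto
      then have "0 \<le> (4-p)/2 + (p-2)/2 * y"
      proof -
        assume z: "(p-2)/2 * 1 \<le> (p-2)/2 * y"
        define z where "z = (p-2)/2 * y"
        have "(p-2)/2 \<le> z" using z by (simp add: z_def)
        then have "0 \<le> (4-p)/2 + z" by argo
        then show ?thesis by (simp add: z_def)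
      qed
      then have "0 \<le> y * ((4-p)/2 + (p-2)/2 * y)" using y0 unfolding y_def by (intro mult_nonneg_nonneg) auto
      moreover have "(p-2)/2 * y\<^sup>2 \<le> 0" using p2 by (intro mult_nonpos_nonneg) auto
      moreover have "(4-p)/2 * y \<le> 8 * y" using y0 p0 unfolding y_def by (intro mult_right_mono) auto
      moreover have "y * ((4-p)/2 + (p-2)/2 * y) = (4-p)/2 * y + (p-2)/2 * y\<^sup>2" by (simp add: algebra_simps power2_eq_square)
      moreover have "\<bar>x\<bar> powr (\<beta> + (2 - \<beta>)) = y" by (simp add: abs_powr2 y_def)
      ultimately show ?thesis by linarith
    next
      case False
      then have "x\<^sup>2 = 1" using y1 by auto
      then show ?thesis by (simp add: uf_def vv_def abs_powr2)
    qed
  qed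
  have dbnd: "\<bar>deriv (uf p) x\<bar> \<le> 8 * \<bar>x\<bar> powr (\<beta> + (2 - \<beta>) - 1)" if x1: "\<bar>x\<bar> \<le> 1" for x
  proof -
    have y0: "0 \<le> x\<^sup>2" and y1: "x\<^sup>2 \<le> 1" using x1 by (auto simp: abs_square_le_1)
    have "\<bar>dvv p (x\<^sup>2)\<bar> \<le> 4"
    proof (cases "x\<^sup>2 < 1")
      case True
      have "\<bar>(4-p)/2 + 2*((p-2)/2)*x\<^sup>2\<bar> \<le> 4"
      proof -
        define w where "w = (2 - p) * x\<^sup>2"
        have "(2 - p) * x\<^sup>2 \<le> (2 - p) * 1" using y1 p2 by (intro mult_left_mono) auto
        then have w2: "w \<le> 2" using p0 by (simp add: w_def)
        have w0: "0 \<le> w" using p2 y0 by (simp add: w_def)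
        have "(4-p)/2 + 2*((p-2)/2)*x\<^sup>2 = (4-p)/2 - w" by (simp add: w_def field_simps)
        moreover have "\<bar>(4-p)/2 - w\<bar> \<le> 4" using w0 w2 p0 p2 unfolding abs_le_iff by argo
        ultimately show ?thesis by simp
      qed
      then show ?thesis using True by (simp add: dvv_def)
    next
      case False
      then have "x\<^sup>2 = 1" using y1 by auto
      then show ?thesis using p0 p2 by (simp add: dvv_def)
    qed
    then have "\<bar>x\<bar> * \<bar>dvv p (x\<^sup>2)\<bar> \<le> \<bar>x\<bar> * 4" by (intro mult_left_mono) auto
    then have "\<bar>2 * x * dvv p (x\<^sup>2)\<bar> \<le> 2 * \<bar>x\<bar> * 4" by (simp add: abs_mult)
    then show ?thesis by (simp add: dd)
  qed
  show ?thesis unfolding test_fun_def p_def[symmetric]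
  proof (intro conjI allI impI)
    show "uf p C1_differentiable_on UNIV" by (rule C1)
    show "uf p (- x) = uf p x" for x by (rule ev)
    show "uf p x = \<bar>x\<bar> powr p" if "1 \<le> \<bar>x\<bar>" for x using that by (rule uf_out)
    show "0 \<le> uf p x" if "\<bar>x\<bar> \<le> 1" for x using bnd[OF that] by blast
    show "uf p x \<le> 8 * \<bar>x\<bar> powr (\<beta> + (2 - \<beta>))" if "\<bar>x\<bar> \<le> 1" for x using bnd[OF that] by blast
    show "\<bar>deriv (uf p) x\<bar> \<le> 8 * \<bar>x\<bar> powr (\<beta> + (2 - \<beta>) - 1)" if "\<bar>x\<bar> \<le> 1" for x using dbnd[OF that] .
  qed
qed



lemma main_part:
  fixes \<beta> \<Lambda> \<delta> :: real
  assumes b0: "0 < \<beta>" and b2: "\<beta> < 2" and L0: "0 < \<Lambda>" and d0: "0 < \<delta>" and bd1: "\<beta> + \<delta> > 1"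
  shows "\<exists>\<epsilon>0 C0 C1. \<epsilon>0 > 0 \<and> C0 > 0 \<and> C1 > 0 \<and>
           (\<forall>\<epsilon> u. admissible_eps \<beta> \<epsilon> \<and> \<epsilon> < \<epsilon>0 \<and> test_fun \<beta> \<Lambda> \<delta> \<epsilon> u \<longrightarrow>
              integrable lborel (L_integrand \<beta> u 0) \<and>
              frac_L \<beta> u 0 \<ge> C0 / \<epsilon> \<and>
              integrable (lborel \<Otimes>\<^sub>M lborel) (G2_integrand \<beta> u 0) \<and>
              0 < Gamma2 \<beta> u 0 \<and> Gamma2 \<beta> u 0 \<le> C1 / \<epsilon>)"
proof -
  define kk where "kk = max \<Lambda> 2"
  define cq where "cq = kk * (2 powr (\<beta> + \<delta> - 1) + 1)"
  define a1 where "a1 = cq\<^sup>2 * (2 / (2 - \<beta>))"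
  define a2 where "a2 = (12 * kk)\<^sup>2 / (min \<beta> (2 - \<beta>) / 4)"
  define c where "c = c_beta \<beta>"
  have c0: "c > 0" using c_beta_pos[OF b0 b2] by (simp add: c_def)
  have a1n: "0 \<le> a1" using b2 by (simp add: a1_def)
  have a2n: "0 \<le> a2" using b0 b2 by (simp add: a2_def)
  define C1 where "C1 = c\<^sup>2 * (2 * (a1 / \<delta> + a2)) + 1"
  have "0 \<le> c\<^sup>2 * (2 * (a1 / \<delta> + a2))" using a1n a2n d0 by (intro mult_nonneg_nonneg add_nonneg_nonneg divide_nonneg_pos) auto
  then have C1p: "C1 > 0" unfolding C1_def by linarith
  show ?thesis
  proof (intro exI conjI allI impI)
    show "min (\<beta>/4) 1 > 0" using b0 by simp
    show "2 * c > 0" using c0 by simp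
    show "C1 > 0" by (rule C1p)
  next
    fix \<epsilon> u assume H: "admissible_eps \<beta> \<epsilon> \<and> \<epsilon> < min (\<beta>/4) 1 \<and> test_fun \<beta> \<Lambda> \<delta> \<epsilon> u"
    then have adm: "admissible_eps \<beta> \<epsilon>" and e4: "\<epsilon> \<le> \<beta>/4" and e1: "\<epsilon> < 1" and tf: "test_fun \<beta> \<Lambda> \<delta> \<epsilon> u"
      by auto
    interpret T: tset \<beta> \<Lambda> \<delta> \<epsilon> u using b0 b2 L0 d0 bd1 adm tf by unfold_locales
    have e0: "0 < \<epsilon>" by (rule T.e0)
    show "integrable lborel (L_integrand \<beta> u 0)" by (rule T.L_integrable)
    show "2 * c / \<epsilon> \<le> frac_L \<beta> u 0" using T.fracL_lower by (simp add: c_def mult.commute)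
    show "integrable (lborel \<Otimes>\<^sub>M lborel) (G2_integrand \<beta> u 0)" by (rule T.G2_integrable[OF e4])
    show "0 < Gamma2 \<beta> u 0" by (rule T.Gamma2_pos[OF e4])
    have A1e: "T.A1 = a1" by (simp add: T.A1_def T.CQ_def T.KK_def T.qq_def a1_def cq_def kk_def)
    have A2e: "T.A2 = a2" by (simp add: T.A2_def T.KK_def T.eta_def a2_def kk_def)
    have BBe: "T.BB = a1 / \<delta> + a2 / \<epsilon>" using d0 e0 by (simp add: T.BB_def A1e A2e)
    have "1 \<le> 1 / \<epsilon>" using e0 e1 by simp
    then have "(a1 / \<delta>) * 1 \<le> (a1 / \<delta>) * (1 / \<epsilon>)" using a1n d0 by (intro mult_left_mono) auto
    then have "a1 / \<delta> \<le> (a1 / \<delta>) / \<epsilon>" by simp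
    then have "T.BB \<le> (a1 / \<delta> + a2) / \<epsilon>" using BBe by (simp add: add_divide_distrib)
    then have "Gamma2 \<beta> u 0 \<le> c\<^sup>2 * (2 * ((a1 / \<delta> + a2) / \<epsilon>))"
      using T.Gamma2_upper[OF e4] c0 unfolding c_def
      by (meson mult_left_mono order_trans zero_le_power2 mult_le_cancel_left_pos zero_less_numeral)
    also have "\<dots> \<le> C1 / \<epsilon>" using e0 by (simp add: C1_def field_simps)
    finally show "Gamma2 \<beta> u 0 \<le> C1 / \<epsilon>" .
  qed
qed


theorem theorem3p1:
  fixes \<beta> \<Lambda> \<delta> :: real
  assumes "0 < \<beta>" "\<beta> < 2" "0 < \<Lambda>" "0 < \<delta>" "\<beta> + \<delta> > 1"
  shows "(\<exists>\<epsilon>0 C0 C1. \<epsilon>0 > 0 \<and> C0 > 0 \<and> C1 > 0 \<and>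
           (\<forall>\<epsilon> u. admissible_eps \<beta> \<epsilon> \<and> \<epsilon> < \<epsilon>0 \<and> test_fun \<beta> \<Lambda> \<delta> \<epsilon> u \<longrightarrow>
              integrable lborel (L_integrand \<beta> u 0) \<and>
              frac_L \<beta> u 0 \<ge> C0 / \<epsilon> \<and>
              integrable (lborel \<Otimes>\<^sub>M lborel) (G2_integrand \<beta> u 0) \<and>
              0 < Gamma2 \<beta> u 0 \<and> Gamma2 \<beta> u 0 \<le> C1 / \<epsilon>))
       \<and> (\<forall>\<mu>>0. \<exists>u \<epsilon> \<Lambda>' \<delta>'. admissible_eps \<beta> \<epsilon> \<and> \<Lambda>' > 0 \<and> \<delta>' > 0 \<and> \<beta> + \<delta>' > 1 \<and>
              test_fun \<beta> \<Lambda>' \<delta>' \<epsilon> u \<and>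
              integrable lborel (L_integrand \<beta> u 0) \<and>
              integrable (lborel \<Otimes>\<^sub>M lborel) (G2_integrand \<beta> u 0) \<and>
              0 < Gamma2 \<beta> u 0 \<and> Gamma2 \<beta> u 0 < \<mu> * (frac_L \<beta> u 0)\<^sup>2)"
proof (intro conjI allI impI)
  show "\<exists>\<epsilon>0 C0 C1. \<epsilon>0 > 0 \<and> C0 > 0 \<and> C1 > 0 \<and>
           (\<forall>\<epsilon> u. admissible_eps \<beta> \<epsilon> \<and> \<epsilon> < \<epsilon>0 \<and> test_fun \<beta> \<Lambda> \<delta> \<epsilon> u \<longrightarrow>
              integrable lborel (L_integrand \<beta> u 0) \<and>
              frac_L \<beta> u 0 \<ge> C0 / \<epsilon> \<and>
              integrable (lborel \<Otimes>\<^sub>M lborel) (G2_integrand \<beta> u 0) \<and>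
              0 < Gamma2 \<beta> u 0 \<and> Gamma2 \<beta> u 0 \<le> C1 / \<epsilon>)"
    using main_part[OF assms] .
next
  fix \<mu> :: real assume mu: "\<mu> > 0"
  have b0: "0 < \<beta>" and b2: "\<beta> < 2" using assms by auto
  obtain e0 C0 C1 where E: "e0 > 0" "C0 > 0" "C1 > 0"
    and P: "\<And>\<epsilon> u. admissible_eps \<beta> \<epsilon> \<Longrightarrow> \<epsilon> < e0 \<Longrightarrow> test_fun \<beta> 8 (2 - \<beta>) \<epsilon> u \<Longrightarrow>
              integrable lborel (L_integrand \<beta> u 0) \<and>
              frac_L \<beta> u 0 \<ge> C0 / \<epsilon> \<and>
              integrable (lborel \<Otimes>\<^sub>M lborel) (G2_integrand \<beta> u 0) \<and>
              0 < Gamma2 \<beta> u 0 \<and> Gamma2 \<beta> u 0 \<le> C1 / \<epsilon>"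
    using main_part[of \<beta> 8 "2 - \<beta>"] b0 b2 by force
  define \<epsilon> where "\<epsilon> = min (min (e0/2) (\<beta>/4)) (min (if 1 < \<beta> then (\<beta>-1)/4 else 1) (\<mu> * C0\<^sup>2 / (2 * C1)))"
  have ep: "0 < \<epsilon>" using E b0 mu by (simp add: \<epsilon>_def)
  have ee0: "\<epsilon> < e0" using E by (simp add: \<epsilon>_def)
  have adm: "admissible_eps \<beta> \<epsilon>" unfolding admissible_eps_def
    using ep b0 by (auto simp: \<epsilon>_def min_def)
  have emu: "\<epsilon> \<le> \<mu> * C0\<^sup>2 / (2 * C1)" by (simp add: \<epsilon>_def)
  define u where "u = uf (\<beta> - \<epsilon>)"
  have tf: "test_fun \<beta> 8 (2 - \<beta>) \<epsilon> u" unfolding u_def by (rule uf_test[OF b0 b2 adm])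
  note R = P[OF adm ee0 tf]
  have Lg: "C0 / \<epsilon> \<le> frac_L \<beta> u 0" and Gu: "Gamma2 \<beta> u 0 \<le> C1 / \<epsilon>" using R by auto
  have c0e: "0 < C0 / \<epsilon>" using E ep by simp
  have "(C0 / \<epsilon>)\<^sup>2 \<le> (frac_L \<beta> u 0)\<^sup>2" using Lg c0e by (intro power_mono) auto
  then have 1: "\<mu> * (C0 / \<epsilon>)\<^sup>2 \<le> \<mu> * (frac_L \<beta> u 0)\<^sup>2" using mu by (intro mult_left_mono) auto
  have "C1 * \<epsilon> \<le> C1 * (\<mu> * C0\<^sup>2 / (2 * C1))" using emu E by (intro mult_left_mono) auto
  also have "\<dots> = \<mu> * C0\<^sup>2 / 2" using E by simp
  also have "\<dots> < \<mu> * C0\<^sup>2" using mu E by simp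
  finally have "C1 * \<epsilon> < \<mu> * C0\<^sup>2" .
  then have "C1 / \<epsilon> < \<mu> * (C0 / \<epsilon>)\<^sup>2" using ep by (simp add: field_simps power2_eq_square)
  then have "Gamma2 \<beta> u 0 < \<mu> * (frac_L \<beta> u 0)\<^sup>2" using Gu 1 by linarith
  then show "\<exists>u \<epsilon> \<Lambda>' \<delta>'. admissible_eps \<beta> \<epsilon> \<and> \<Lambda>' > 0 \<and> \<delta>' > 0 \<and> \<beta> + \<delta>' > 1 \<and>
              test_fun \<beta> \<Lambda>' \<delta>' \<epsilon> u \<and>
              integrable lborel (L_integrand \<beta> u 0) \<and>
              integrable (lborel \<Otimes>\<^sub>M lborel) (G2_integrand \<beta> u 0) \<and>
              0 < Gamma2 \<beta> u 0 \<and> Gamma2 \<beta> u 0 < \<mu> * (frac_L \<beta> u 0)\<^sup>2"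
    using adm tf R b2 by (intro exI[of _ u] exI[of _ \<epsilon>] exI[of _ 8] exI[of _ "2 - \<beta>"]) auto
qed


end
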